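(* In the slot formulation of the weighted balls-into-bins process, for every $a$ with $0<a<\lambda/2$ and $Sa\le 1/2$, and every $t\ge0$, $$\mathbb E\left[\Psi(x^s(t+1))-\Psi(x^s(t))\,\middle|\,x^s(t)\right]\le\frac{3a}{2N}\Psi(x^s(t)).$$
   Context: Weighted balls into weighted bins: $n$ bins with positive integer weights $N_1,\dots,N_n$, $N=\sum_iN_i$; $\mathcal D$ on $[n]$ is $(\alpha,\beta)$-biased, i.e. $\frac{N_i}{\alpha N}\le\Pr_{\mathcal D}[i]\le\frac{\beta N_i}{N}$. Ball weights $w(t)$ are i.i.d. from $\mathcal W$ on $[0,\infty)$ with $\mathbb E[\mathcal W]=1$ and $M(z)=\mathbb E[e^{z\mathcal W}]$ finite at $z=\lambda$ for some $\lambda>0$; $S\ge1$ is a constant with $M''(z)\le2S$ for all $|z|<\lambda/2$. Each round two bins are sampled independently from $\mathcal D$ and the ball goes to the sampled bin with smaller value $v_i(t-1)=w_i(t-1)/N_i$. Slot formulation: bin $i$ consists of $N_i$ unit slots; the normalized slot vector $x^s(t)\in\mathbb R^N$ has, for each slot of bin $i$, the entry $v_i(t)-\frac1N\sum_{t'\le t}w(t')$, indexed so that $x^s_1(t)\ge\dots\ge x^s_N(t)$. $\Psi(y)=\sum_je^{-ay_j}$. *)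

theory Defs
  imports "HOL-Probability.Probability"
begin

text \<open>Bins are indexed by 0..n-1; bin i has positive integer weight Nb i.
  A state is the load vector ld :: nat => real (ld i = w_i(t)).
  Since all balls start in empty bins, the total weight thrown so far equals the
  total load sum over i<n of ld i.\<close>

definition total_weight :: "nat \<Rightarrow> (nat \<Rightarrow> nat) \<Rightarrow> nat" where
  "total_weight n Nb = (\<Sum>i<n. Nb i)"

definition bin_value :: "(nat \<Rightarrow> nat) \<Rightarrow> (nat \<Rightarrow> real) \<Rightarrow> nat \<Rightarrow> real" where
  "bin_value Nb ld i = ld i / real (Nb i)"

definition biased :: "nat \<Rightarrow> (nat \<Rightarrow> nat) \<Rightarrow> real \<Rightarrow> real \<Rightarrow> nat pmf \<Rightarrow> bool" where
  "biased n Nb \<alpha> \<beta> D \<longleftrightarrow> set_pmf D \<subseteq> {..<n} \<and>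
     (\<forall>i<n. real (Nb i) / (\<alpha> * real (total_weight n Nb)) \<le> pmf D i \<and>
            pmf D i \<le> \<beta> * real (Nb i) / real (total_weight n Nb))"

definition slot_vector :: "nat \<Rightarrow> (nat \<Rightarrow> nat) \<Rightarrow> (nat \<Rightarrow> real) \<Rightarrow> real list" where
  "slot_vector n Nb ld =
     rev (sort (concat (map (\<lambda>i. replicate (Nb i)
        (bin_value Nb ld i - (\<Sum>k<n. ld k) / real (total_weight n Nb))) [0..<n])))"

definition Psi :: "real \<Rightarrow> real list \<Rightarrow> real" where
  "Psi a y = sum_list (map (\<lambda>yj. exp (- a * yj)) y)"

definition dest :: "(nat \<Rightarrow> nat) \<Rightarrow> (nat \<Rightarrow> real) \<Rightarrow> (nat \<Rightarrow> nat \<Rightarrow> nat) \<Rightarrow> nat \<Rightarrow> nat \<Rightarrow> nat" where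
  "dest Nb ld tb i j =
     (if bin_value Nb ld i < bin_value Nb ld j then i
      else if bin_value Nb ld j < bin_value Nb ld i then j
      else tb i j)"

definition step :: "(nat \<Rightarrow> nat) \<Rightarrow> (nat \<Rightarrow> real) \<Rightarrow> (nat \<Rightarrow> nat \<Rightarrow> nat) \<Rightarrow> nat \<Rightarrow> nat \<Rightarrow> real
     \<Rightarrow> (nat \<Rightarrow> real)" where
  "step Nb ld tb i j \<omega> = (let d = dest Nb ld tb i j in ld(d := ld d + \<omega>))"

definition mgf :: "real measure \<Rightarrow> real \<Rightarrow> real" where
  "mgf Wm z = (\<integral>x. exp (z * x) \<partial>Wm)"

end

theory Submission imports Defs begin
lemma pow_le_exp:
  fixes x e :: real and j :: nat
  assumes "x \<ge> 0" "e > 0"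
  shows "x ^ j \<le> (real j / e) ^ j * exp (e * x)"
proof (cases "j = 0")
  case True then show ?thesis using assms by simp
next
  case False
  have "x = (real j / e) * (e * x / real j)" using False assms by (simp add: field_simps)
  also have "\<dots> \<le> (real j / e) * exp (e * x / real j)"
    using exp_ge_add_one_self[of "e * x / real j"] False assms
    by (intro mult_left_mono) (linarith, simp)
  finally have "x ^ j \<le> ((real j / e) * exp (e * x / real j)) ^ j"
    using assms by (intro power_mono) auto
  also have "\<dots> = (real j / e) ^ j * exp (real j * (e * x / real j))"
    by (simp only: power_mult_distrib exp_of_nat_mult)
  also have "real j * (e * x / real j) = e * x" using False by simp
  finally show ?thesis .
qed

lemma meas_W:
  assumes "sets M = sets borel" "f \<in> borel_measurable borel"
  shows "f \<in> borel_measurable M"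
  using assms measurable_cong_sets[OF assms(1) refl] by simp

lemma int_abs:
  fixes M :: "real measure"
  assumes sets: "sets M = sets borel" and nn: "AE x in M. x \<ge> 0"
    and ie: "integrable M (\<lambda>x. exp (lam * x))" and c: "0 \<le> c" "c < lam"
  shows "integrable M (\<lambda>x. \<bar>x\<bar> ^ j * exp (c * \<bar>x\<bar>))"
proof (rule Bochner_Integration.integrable_bound[where f = "\<lambda>x. (real j / (lam - c)) ^ j * exp (lam * x)"])
  show "integrable M (\<lambda>x. (real j / (lam - c)) ^ j * exp (lam * x))"
    using ie by simp
  show "(\<lambda>x. \<bar>x\<bar> ^ j * exp (c * \<bar>x\<bar>)) \<in> borel_measurable M"
    by (rule meas_W[OF sets]) measurable
  show "AE x in M. norm (\<bar>x\<bar> ^ j * exp (c * \<bar>x\<bar>)) \<le> norm ((real j / (lam - c)) ^ j * exp (lam * x))"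
    using nn
  proof eventually_elim
    case (elim x)
    have "x ^ j * exp (c * x) \<le> (real j / (lam - c)) ^ j * exp ((lam - c) * x) * exp (c * x)"
      using pow_le_exp[of x "lam - c" j] elim c by (intro mult_right_mono) auto
    also have "\<dots> = (real j / (lam - c)) ^ j * exp (lam * x)"
      by (simp add: mult.assoc flip: exp_add) (simp add: algebra_simps)
    finally show ?case using elim c by simp
  qed
qed

lemma int_gen:
  fixes M :: "real measure"
  assumes sets: "sets M = sets borel" and nn: "AE x in M. x \<ge> 0"
    and ie: "integrable M (\<lambda>x. exp (lam * x))" and c: "0 \<le> c" "c < lam" and w: "\<bar>w\<bar> \<le> c"
  shows "integrable M (\<lambda>x. x ^ j * exp (w * x))"
proof (rule Bochner_Integration.integrable_bound[OF int_abs[OF sets nn ie c, of j]])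
  show "(\<lambda>x. x ^ j * exp (w * x)) \<in> borel_measurable M"
    by (rule meas_W[OF sets]) measurable
  show "AE x in M. norm (x ^ j * exp (w * x)) \<le> norm (\<bar>x\<bar> ^ j * exp (c * \<bar>x\<bar>))"
  proof (intro AE_I2)
    fix x :: real
    have "w * x \<le> c * \<bar>x\<bar>"
      using w abs_mult[of w x] abs_ge_self[of "w*x"] mult_right_mono[OF w, of "\<bar>x\<bar>"] by linarith
    then show "norm (x ^ j * exp (w * x)) \<le> norm (\<bar>x\<bar> ^ j * exp (c * \<bar>x\<bar>))"
      by (simp add: abs_mult power_abs mult_left_mono)
  qed
qed

lemma exp_taylor2:
  fixes u :: real
  shows "\<bar>exp u - 1 - u\<bar> \<le> exp \<bar>u\<bar> * u^2 / 2"
    and "u \<ge> 0 \<Longrightarrow> exp u \<le> 1 + u + exp u * u^2 / 2"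
proof -
  obtain t where t: "\<bar>t\<bar> \<le> \<bar>u\<bar>" "exp u = (\<Sum>m<2. (u ^ m) / fact m) + (exp t / fact 2) * u ^ 2"
    using Maclaurin_exp_le[of u 2] by blast
  have e: "exp u - 1 - u = exp t * u^2 / 2" using t(2) by (simp add: numeral_2_eq_2)
  have "exp t \<le> exp \<bar>u\<bar>" using t(1) by simp
  then have "exp t * u^2 / 2 \<le> exp \<bar>u\<bar> * u^2 / 2" by (intro divide_right_mono mult_right_mono) auto
  have "exp t * u^2 / 2 \<ge> 0" by simp
  then have "\<bar>exp u - 1 - u\<bar> = exp t * u^2 / 2" using e by (metis abs_of_nonneg)
  then show "\<bar>exp u - 1 - u\<bar> \<le> exp \<bar>u\<bar> * u^2 / 2"
    using \<open>exp t * u^2 / 2 \<le> exp \<bar>u\<bar> * u^2 / 2\<close> by linarith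
  show "u \<ge> 0 \<Longrightarrow> exp u \<le> 1 + u + exp u * u^2 / 2"
    using \<open>exp t * u^2 / 2 \<le> exp \<bar>u\<bar> * u^2 / 2\<close> e by simp
qed

lemma quad_deriv:
  fixes f :: "real \<Rightarrow> real"
  assumes d: "d > 0" and b: "\<And>h. h \<noteq> 0 \<Longrightarrow> \<bar>h\<bar> < d \<Longrightarrow> \<bar>f (z + h) - f z - h * D\<bar> \<le> K * h^2"
  shows "(f has_real_derivative D) (at z)"
proof -
  have "((\<lambda>h. (f (z + h) - f z) / h - D) \<longlongrightarrow> 0) (at 0)"
  proof (rule Lim_null_comparison)
    show "\<forall>\<^sub>F h in at 0. norm ((f (z + h) - f z) / h - D) \<le> \<bar>K\<bar> * \<bar>h\<bar>"
    proof -
    have *: "\<forall>h. h \<noteq> 0 \<and> dist h 0 < d \<longrightarrow> norm ((f (z + h) - f z) / h - D) \<le> \<bar>K\<bar> * \<bar>h\<bar>"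
    proof (intro allI impI)
      fix h :: real assume h: "h \<noteq> 0 \<and> dist h 0 < d"
      have "(f (z + h) - f z) / h - D = (f (z + h) - f z - h * D) / h" using h by (simp add: field_simps)
      also have "norm \<dots> = \<bar>f (z + h) - f z - h * D\<bar> / \<bar>h\<bar>" by (simp add: abs_divide)
      also have "\<dots> \<le> K * h^2 / \<bar>h\<bar>" using b[of h] h by (intro divide_right_mono) auto
      also have "\<dots> = K * \<bar>h\<bar>" using h by (cases "h > 0") (auto simp: power2_eq_square field_simps)
      also have "\<dots> \<le> \<bar>K\<bar> * \<bar>h\<bar>" by (intro mult_right_mono) auto
      finally show "norm ((f (z + h) - f z) / h - D) \<le> \<bar>K\<bar> * \<bar>h\<bar>" .
    qed
    show ?thesis unfolding eventually_at using d * by blast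
    qed
    show "((\<lambda>h. \<bar>K\<bar> * \<bar>h\<bar>) \<longlongrightarrow> 0) (at 0)"
      by (auto intro!: tendsto_eq_intros)
  qed
  then have "((\<lambda>h. (f (z + h) - f z) / h) \<longlongrightarrow> D) (at 0)"
    by (rule LIM_zero_cancel)
  then show ?thesis by (simp add: DERIV_def)
qed

lemma deriv_F:
  fixes M :: "real measure"
  assumes sets: "sets M = sets borel" and nn: "AE x in M. x \<ge> 0"
    and ie: "integrable M (\<lambda>x. exp (lam * x))" and lam: "lam > 0" and z: "\<bar>z\<bar> < lam / 2"
  shows "((\<lambda>z. \<integral>x. x ^ k * exp (z * x) \<partial>M) has_real_derivative (\<integral>x. x ^ Suc k * exp (z * x) \<partial>M)) (at z)"
proof (rule quad_deriv)
  define c where "c = 3 * lam / 4"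
  have c: "0 \<le> c" "c < lam" using lam by (auto simp: c_def)
  define K where "K = (\<integral>x. \<bar>x\<bar> ^ (k+2) * exp (c * \<bar>x\<bar>) \<partial>M) / 2"
  show "lam / 4 > 0" using lam by simp
  fix h :: real assume h: "h \<noteq> 0" "\<bar>h\<bar> < lam / 4"
  have zc: "\<bar>z\<bar> \<le> c" and zhc: "\<bar>z + h\<bar> \<le> c" using z h abs_triangle_ineq[of z h] by (auto simp: c_def)
  have i1: "integrable M (\<lambda>x. x ^ k * exp ((z + h) * x))" by (rule int_gen[OF sets nn ie c zhc])
  have i2: "integrable M (\<lambda>x. x ^ k * exp (z * x))" by (rule int_gen[OF sets nn ie c zc])
  have i3: "integrable M (\<lambda>x. x ^ Suc k * exp (z * x))" by (rule int_gen[OF sets nn ie c zc])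
  have i4: "integrable M (\<lambda>x. h^2 / 2 * (\<bar>x\<bar> ^ (k+2) * exp (c * \<bar>x\<bar>)))"
    using int_abs[OF sets nn ie c, of "k+2"] by simp
  have eq: "(\<integral>x. x ^ k * exp ((z + h) * x) \<partial>M) - (\<integral>x. x ^ k * exp (z * x) \<partial>M)
      - h * (\<integral>x. x ^ Suc k * exp (z * x) \<partial>M)
      = (\<integral>x. x ^ k * exp ((z + h) * x) - x ^ k * exp (z * x) - h * (x ^ Suc k * exp (z * x)) \<partial>M)"
    using i1 i2 i3 by (simp add: integral_diff)
  have "\<bar>\<integral>x. x ^ k * exp ((z + h) * x) - x ^ k * exp (z * x) - h * (x ^ Suc k * exp (z * x)) \<partial>M\<bar>
      \<le> (\<integral>x. h^2 / 2 * (\<bar>x\<bar> ^ (k+2) * exp (c * \<bar>x\<bar>)) \<partial>M)"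
  proof (rule integral_abs_bound_integral)
    show "integrable M (\<lambda>x. x ^ k * exp ((z + h) * x) - x ^ k * exp (z * x) - h * (x ^ Suc k * exp (z * x)))"
      using i1 i2 i3 by auto
    show "integrable M (\<lambda>x. h^2 / 2 * (\<bar>x\<bar> ^ (k+2) * exp (c * \<bar>x\<bar>)))" by (rule i4)
    fix x :: real assume "x \<in> space M"
    have "\<bar>x ^ k * exp ((z + h) * x) - x ^ k * exp (z * x) - h * (x ^ Suc k * exp (z * x))\<bar>
        = \<bar>x ^ k * exp (z * x) * (exp (h * x) - 1 - h * x)\<bar>"
      by (simp add: algebra_simps exp_add)
    also have "\<dots> = \<bar>x\<bar> ^ k * exp (z * x) * \<bar>exp (h * x) - 1 - h * x\<bar>"
      by (simp add: abs_mult power_abs)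
    also have "\<dots> \<le> \<bar>x\<bar> ^ k * exp (\<bar>z\<bar> * \<bar>x\<bar>) * (exp (\<bar>h\<bar> * \<bar>x\<bar>) * (h * x)^2 / 2)"
    proof (rule mult_mono)
      show "\<bar>x\<bar> ^ k * exp (z * x) \<le> \<bar>x\<bar> ^ k * exp (\<bar>z\<bar> * \<bar>x\<bar>)"
        by (intro mult_left_mono) (auto simp flip: abs_mult)
      show "\<bar>exp (h * x) - 1 - h * x\<bar> \<le> exp (\<bar>h\<bar> * \<bar>x\<bar>) * (h * x)^2 / 2"
        using exp_taylor2(1)[of "h * x"] by (simp add: abs_mult)
    qed auto
    also have "\<dots> = h^2 / 2 * (\<bar>x\<bar> ^ (k+2) * exp ((\<bar>z\<bar> + \<bar>h\<bar>) * \<bar>x\<bar>))"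
      by (simp add: algebra_simps exp_add power2_eq_square power_add)
    also have "\<dots> \<le> h^2 / 2 * (\<bar>x\<bar> ^ (k+2) * exp (c * \<bar>x\<bar>))"
    proof -
      have "\<bar>z\<bar> + \<bar>h\<bar> \<le> c" using z h by (auto simp: c_def)
      then have "(\<bar>z\<bar> + \<bar>h\<bar>) * \<bar>x\<bar> \<le> c * \<bar>x\<bar>" by (intro mult_right_mono) auto
      then show ?thesis by (intro mult_left_mono) auto
    qed
    finally show "\<bar>x ^ k * exp ((z + h) * x) - x ^ k * exp (z * x) - h * (x ^ Suc k * exp (z * x))\<bar>
        \<le> h^2 / 2 * (\<bar>x\<bar> ^ (k+2) * exp (c * \<bar>x\<bar>))" .
  qed
  also have "\<dots> = K * h^2" by (simp add: K_def)
  finally show "\<bar>(\<integral>x. x ^ k * exp ((z + h) * x) \<partial>M) - (\<integral>x. x ^ k * exp (z * x) \<partial>M)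
      - h * (\<integral>x. x ^ Suc k * exp (z * x) \<partial>M)\<bar> \<le> K * h^2" using eq by simp
qed

lemma sum_rev_sort: "sum_list (map (f::real \<Rightarrow> real) (rev (sort xs))) = sum_list (map f xs)"
proof -
  have "sum_list (map f (rev (sort xs))) = sum_list (map f (sort xs))"
    by (simp add: rev_map[symmetric] sum_list_rev)
  also have "\<dots> = sum_mset (mset (map f (sort xs)))" by (simp only: sum_mset_sum_list)
  also have "\<dots> = sum_mset (mset (map f xs))" by (simp only: mset_map mset_sort)
  also have "\<dots> = sum_list (map f xs)" by (simp only: sum_mset_sum_list)
  finally show ?thesis .
qed

lemma sum_concat: "sum_list (map f (concat xss)) = sum_list (map (\<lambda>xs. sum_list (map f xs)) xss)"
  by (induct xss) auto

lemma Psi_slot: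
  "Psi a (slot_vector n Nb ld) = (\<Sum>i<n. real (Nb i) *
      exp (- a * (bin_value Nb ld i - (\<Sum>k<n. ld k) / real (total_weight n Nb))))"
proof -
  define f where "f = (\<lambda>yj. exp (- a * yj))"
  define c where "c = (\<lambda>i. bin_value Nb ld i - (\<Sum>k<n. ld k) / real (total_weight n Nb))"
  have "Psi a (slot_vector n Nb ld) = sum_list (map f (rev (sort (concat (map (\<lambda>i. replicate (Nb i) (c i)) [0..<n])))))"
    by (simp add: Psi_def slot_vector_def f_def c_def)
  also have "\<dots> = sum_list (map f (concat (map (\<lambda>i. replicate (Nb i) (c i)) [0..<n])))"
    by (rule sum_rev_sort)
  also have "\<dots> = (\<Sum>i<n. real (Nb i) * f (c i))"
  proof -
    have "sum_list (map f (concat (map (\<lambda>i. replicate (Nb i) (c i)) [0..<n])))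
        = sum_list (map (\<lambda>i. real (Nb i) * f (c i)) [0..<n])"
      by (simp add: sum_concat comp_def sum_list_replicate)
    also have "\<dots> = (\<Sum>i<n. real (Nb i) * f (c i))"
      by (simp add: sum_set_upt_conv_sum_list_nat[symmetric] atLeast0LessThan)
    finally show ?thesis .
  qed
  finally show ?thesis by (simp add: f_def c_def)
qed

lemma Psi_step:
  fixes \<omega> a :: real
  assumes Nb: "\<And>i. i < n \<Longrightarrow> Nb i > 0" and N: "total_weight n Nb > 0"
    and a: "a > 0" and w: "\<omega> \<ge> 0"
  shows "Psi a (slot_vector n Nb (ld(d := ld d + \<omega>))) \<le> exp (a / real (total_weight n Nb) * \<omega>) * Psi a (slot_vector n Nb ld)"
proof -
  define N where "N = real (total_weight n Nb)"
  have Npos: "N > 0" using N by (simp add: N_def)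
  define ld' where "ld' = ld(d := ld d + \<omega>)"
  define w' where "w' = (if d < n then \<omega> else 0)"
  have w': "0 \<le> w'" "w' \<le> \<omega>" using w by (auto simp: w'_def)
  have sum': "(\<Sum>k<n. ld' k) = (\<Sum>k<n. ld k) + w'"
  proof -
    have "(\<Sum>k<n. ld' k) = (\<Sum>k<n. ld k + (if k = d then \<omega> else 0))"
      by (intro sum.cong) (auto simp: ld'_def)
    also have "\<dots> = (\<Sum>k<n. ld k) + w'" by (simp add: sum.distrib w'_def)
    finally show ?thesis .
  qed
  have "Psi a (slot_vector n Nb ld') = (\<Sum>i<n. real (Nb i) * exp (- a * (bin_value Nb ld' i - (\<Sum>k<n. ld' k) / N)))"
    by (simp add: Psi_slot N_def)
  also have "\<dots> \<le> (\<Sum>i<n. exp (a / N * \<omega>) * (real (Nb i) * exp (- a * (bin_value Nb ld i - (\<Sum>k<n. ld k) / N))))"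
  proof (intro sum_mono)
    fix i assume i: "i \<in> {..<n}"
    have Nbi: "real (Nb i) > 0" using Nb i by auto
    have "ld i \<le> ld' i" using w by (auto simp: ld'_def)
    then have "ld i / real (Nb i) \<le> ld' i / real (Nb i)" using Nbi by (intro divide_right_mono) auto
    moreover have "w' / N \<le> \<omega> / N" using w' Npos by (intro divide_right_mono) auto
    ultimately have A: "a * (ld i / real (Nb i)) \<le> a * (ld' i / real (Nb i))" and B: "a * (w' / N) \<le> a * (\<omega> / N)"
      using a by (auto intro!: mult_left_mono simp del: times_divide_eq_right)
    have e1: "- a * (bin_value Nb ld' i - (\<Sum>k<n. ld' k) / N) = - (a * (ld' i / real (Nb i))) + a * ((\<Sum>k<n. ld k) / N) + a * (w' / N)"
      unfolding bin_value_def sum' by (simp add: add_divide_distrib algebra_simps)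
    have e2: "a / N * \<omega> + - a * (bin_value Nb ld i - (\<Sum>k<n. ld k) / N) = a * (\<omega> / N) - (a * (ld i / real (Nb i))) + a * ((\<Sum>k<n. ld k) / N)"
      unfolding bin_value_def by (simp add: algebra_simps)
    have "- a * (bin_value Nb ld' i - (\<Sum>k<n. ld' k) / N) \<le> a / N * \<omega> + - a * (bin_value Nb ld i - (\<Sum>k<n. ld k) / N)"
      unfolding e1 e2 using A B by linarith
    then have "exp (- a * (bin_value Nb ld' i - (\<Sum>k<n. ld' k) / N)) \<le> exp (a / N * \<omega>) * exp (- a * (bin_value Nb ld i - (\<Sum>k<n. ld k) / N))"
      by (simp flip: exp_add)
    then show "real (Nb i) * exp (- a * (bin_value Nb ld' i - (\<Sum>k<n. ld' k) / N)) \<le> exp (a / N * \<omega>) * (real (Nb i) * exp (- a * (bin_value Nb ld i - (\<Sum>k<n. ld k) / N)))"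
      using Nbi by (simp add: algebra_simps mult_left_mono)
  qed
  also have "\<dots> = exp (a / N * \<omega>) * Psi a (slot_vector n Nb ld)"
    by (simp add: Psi_slot N_def sum_distrib_left)
  finally show ?thesis by (simp add: ld'_def N_def)
qed

theorem mainTheorem10:
  fixes n :: nat and Nb :: "nat \<Rightarrow> nat" and D :: "nat pmf" and \<alpha> \<beta> :: real
    and Wm :: "real measure" and lam S a :: real
    and tb :: "nat \<Rightarrow> nat \<Rightarrow> nat" and ld :: "nat \<Rightarrow> real"
  assumes n_pos: "n \<ge> 1"
    and Nb_pos: "\<And>i. i < n \<Longrightarrow> Nb i > 0"
    and D_biased: "biased n Nb \<alpha> \<beta> D"
    and W_prob: "prob_space Wm" and W_sets: "sets Wm = sets borel"
    and W_nonneg: "AE x in Wm. x \<ge> 0"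
    and W_int: "integrable Wm (\<lambda>x. x)" and W_mean: "(\<integral>x. x \<partial>Wm) = 1"
    and lam_pos: "lam > 0" and mgf_fin: "integrable Wm (\<lambda>x. exp (lam * x))"
    and S_ge: "S \<ge> 1"
    and S_bound: "\<And>z. \<bar>z\<bar> < lam / 2 \<Longrightarrow> deriv (deriv (mgf Wm)) z \<le> 2 * S"
    and tb_ok: "\<And>i j. tb i j \<in> {i, j}"
    and ld_nonneg: "\<And>i. i < n \<Longrightarrow> ld i \<ge> 0"
    and a_pos: "0 < a" and a_lam: "a < lam / 2" and Sa: "S * a \<le> 1 / 2"
  shows "(\<integral>\<omega>. measure_pmf.expectation D (\<lambda>i. measure_pmf.expectation D (\<lambda>j.
            Psi a (slot_vector n Nb (step Nb ld tb i j \<omega>)))) \<partial>Wm)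
          - Psi a (slot_vector n Nb ld)
         \<le> 3 * a / (2 * real (total_weight n Nb)) * Psi a (slot_vector n Nb ld)"
proof -
  define N where "N = real (total_weight n Nb)"
  have "Nb 0 \<le> total_weight n Nb" unfolding total_weight_def
    using n_pos by (intro member_le_sum) auto
  then have Npos: "N > 0" using Nb_pos[of 0] n_pos by (simp add: N_def)
  have N1: "N \<ge> 1" using \<open>Nb 0 \<le> total_weight n Nb\<close> Nb_pos[of 0] n_pos by (simp add: N_def)
  define P where "P = Psi a (slot_vector n Nb ld)"
  have P0: "P \<ge> 0" unfolding P_def Psi_def by (intro sum_list_nonneg) auto
  define z where "z = a / N"
  have z: "0 < z" "z \<le> a" using a_pos Npos N1 by (auto simp: z_def field_simps)
  have finD: "finite (set_pmf D)" using D_biased unfolding biased_def by (meson finite_lessThan finite_subset)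
  have Ebound: "measure_pmf.expectation D f \<le> c" if "\<And>x. f x \<le> c" for f :: "nat \<Rightarrow> real" and c
  proof -
    have "measure_pmf.expectation D f \<le> measure_pmf.expectation D (\<lambda>_. c)"
      using that by (intro integral_mono integrable_measure_pmf_finite finD)
    then show ?thesis by simp
  qed
  define h where "h = (\<lambda>\<omega>. measure_pmf.expectation D (\<lambda>i. measure_pmf.expectation D (\<lambda>j.
            Psi a (slot_vector n Nb (step Nb ld tb i j \<omega>)))))"
  have hb: "h \<omega> \<le> exp (z * \<omega>) * P" if w: "\<omega> \<ge> 0" for \<omega>
    unfolding h_def
  proof (intro Ebound)
    fix i j
    show "Psi a (slot_vector n Nb (step Nb ld tb i j \<omega>)) \<le> exp (z * \<omega>) * P"
      unfolding step_def Let_def P_def z_def N_def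
      by (rule Psi_step[OF Nb_pos _ a_pos w]) (use Npos N_def in auto)
  qed
  define F where "F = (\<lambda>k w. \<integral>x. x ^ k * exp (w * x) \<partial>Wm)"
  define U where "U = {w::real. \<bar>w\<bar> < lam / 2}"
  have Uo: "open U" unfolding U_def by (intro open_Collect_less continuous_intros)
  have mgfF: "mgf Wm = F 0" by (auto simp: F_def mgf_def)
  have dF: "(F k has_real_derivative F (Suc k) w) (at w)" if "w \<in> U" for k w
    unfolding F_def by (rule deriv_F[OF W_sets W_nonneg mgf_fin lam_pos]) (use that U_def in auto)
  have d1: "deriv (mgf Wm) w = F 1 w" if "w \<in> U" for w
    unfolding mgfF using dF[OF that, of 0] by (simp add: DERIV_imp_deriv)
  have zU: "z \<in> U" using z a_lam by (auto simp: U_def)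
  have "(deriv (mgf Wm) has_real_derivative F 2 z) (at z)"
    using has_field_derivative_transform_within_open[OF dF[OF zU, of 1] Uo zU, of "deriv (mgf Wm)"] d1
    by (simp add: numeral_2_eq_2)
  then have "deriv (deriv (mgf Wm)) z = F 2 z" by (rule DERIV_imp_deriv)
  then have F2: "F 2 z \<le> 2 * S" using S_bound[of z] zU by (auto simp: U_def)
  have cc: "0 \<le> lam / 2" "lam / 2 < lam" using lam_pos by auto
  have zc: "\<bar>z\<bar> \<le> lam / 2" using zU by (auto simp: U_def)
  have ie: "integrable Wm (\<lambda>x. exp (z * x))"
    using int_gen[OF W_sets W_nonneg mgf_fin cc zc, of 0] by simp
  have ie2: "integrable Wm (\<lambda>x. x ^ 2 * exp (z * x))"
    using int_gen[OF W_sets W_nonneg mgf_fin cc zc, of 2] by simp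
  have "mgf Wm z = (\<integral>x. exp (z * x) \<partial>Wm)" by (simp add: mgf_def)
  also have "\<dots> \<le> (\<integral>x. 1 + z * x + z^2 / 2 * (x ^ 2 * exp (z * x)) \<partial>Wm)"
  proof (rule integral_mono_AE)
    show "integrable Wm (\<lambda>x. 1 + z * x + z^2 / 2 * (x ^ 2 * exp (z * x)))"
      using ie2 W_int finite_measure.integrable_const[OF prob_space.finite_measure[OF W_prob]]
      by (intro Bochner_Integration.integrable_add integrable_mult_right) blast+
    show "AE x in Wm. exp (z * x) \<le> 1 + z * x + z^2 / 2 * (x ^ 2 * exp (z * x))"
      using W_nonneg
    proof eventually_elim
      case (elim x)
      then have "z * x \<ge> 0" using z by simp
      from exp_taylor2(2)[OF this] show ?case by (simp add: power_mult_distrib algebra_simps)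
    qed
  qed (rule ie)
  also have "\<dots> = 1 + z + z^2 / 2 * F 2 z"
  proof -
    have i1: "integrable Wm (\<lambda>x. 1::real)"
      using finite_measure.integrable_const[OF prob_space.finite_measure[OF W_prob]] by blast
    have i2: "integrable Wm (\<lambda>x. z * x)" using W_int by (rule integrable_mult_right)
    have i3: "integrable Wm (\<lambda>x. z^2 / 2 * (x ^ 2 * exp (z * x)))" using ie2 by (rule integrable_mult_right)
    have "(\<integral>x. 1 + z * x + z^2 / 2 * (x ^ 2 * exp (z * x)) \<partial>Wm)
        = (\<integral>x. 1 + z * x \<partial>Wm) + (\<integral>x. z^2 / 2 * (x ^ 2 * exp (z * x)) \<partial>Wm)"
      using Bochner_Integration.integrable_add[OF i1 i2] i3 by (rule Bochner_Integration.integral_add)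
    also have "(\<integral>x. 1 + z * x \<partial>Wm) = (\<integral>x. 1 \<partial>Wm) + (\<integral>x. z * x \<partial>Wm)"
      using i1 i2 by (rule Bochner_Integration.integral_add)
    also have "(\<integral>x. (1::real) \<partial>Wm) = 1"
      using prob_space.prob_space[OF W_prob] by simp
    also have "(\<integral>x. z * x \<partial>Wm) = z" using W_mean by simp
    also have "(\<integral>x. z^2 / 2 * (x ^ 2 * exp (z * x)) \<partial>Wm) = z^2 / 2 * F 2 z"
      by (simp add: F_def)
    finally show ?thesis .
  qed
  also have "\<dots> \<le> 1 + z + z^2 / 2 * (2 * S)"
    using F2 by (intro add_left_mono mult_left_mono) auto
  also have "\<dots> \<le> 1 + 3 * z / 2"
  proof -
    have "S * z \<le> 1 / 2" using Sa z S_ge by (meson le_trans mult_left_mono order_trans zero_le_one)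
    then have "z * (S * z) \<le> z * (1/2)" using z by (intro mult_left_mono) auto
    then show ?thesis by (simp add: power2_eq_square algebra_simps)
  qed
  finally have mgfb: "mgf Wm z \<le> 1 + 3 * z / 2" .
  have goal: "(\<integral>\<omega>. h \<omega> \<partial>Wm) - P \<le> 3 * a / (2 * N) * P"
  proof (cases "integrable Wm h")
    case True
    have "(\<integral>\<omega>. h \<omega> \<partial>Wm) \<le> (\<integral>\<omega>. exp (z * \<omega>) * P \<partial>Wm)"
      using True ie W_nonneg hb by (intro integral_mono_AE) (auto elim: AE_mp)
    also have "\<dots> = mgf Wm z * P" by (simp add: mgf_def)
    also have "\<dots> \<le> (1 + 3 * z / 2) * P" using mgfb P0 by (intro mult_right_mono)
    finally show ?thesis by (simp add: z_def algebra_simps)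
  next
    case False
    then have "(\<integral>\<omega>. h \<omega> \<partial>Wm) = 0" by (rule not_integrable_integral_eq)
    moreover have "0 \<le> 3 * a / (2 * N) * P"
      using P0 a_pos Npos by (intro mult_nonneg_nonneg divide_nonneg_nonneg) auto
    ultimately show ?thesis using P0 by linarith
  qed
  then show ?thesis by (simp add: h_def P_def N_def)
qed

end
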